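(* Let $d_h,d_b\ge1$, $d=2d_h+d_b+2$, $n\ge1$, and $s_1,\dots,s_n\in\mathbb{Q}^{d_b}$. Let $K^e=(k_1,\dots,k_n)$ and $V^e=(v_1,\dots,v_n)$ with $k_i=[0_{d_h},0_{d_b},0_{d_h},-1,i]$ and $v_i=[0_{d_h},s_i,0_{d_h},0,0]$. Let $t\in\mathbb{N}$ and let $q_t\in\mathbb{Q}^d$ be any vector whose last two coordinates are $t+1$ and $1$. Then $$\mathrm{Att}(q_t,K^e,V^e)=[0_{d_h},s_{\min\{t+1,n\}},0_{d_h},0,0].$$
   Context: Vectors are written as concatenations of blocks $[\cdot,\dots]$; $0_k$ is the zero vector of length $k$. $\mathrm{Att}(q,K,V)=\sum_{i=1}^n\alpha_iv_i$ where $(\alpha_1,\dots,\alpha_n)=\mathrm{hardmax}(f^{att}(q,k_1),\dots,f^{att}(q,k_n))$, with $\mathrm{hardmax}(x)_i=1/r$ if $x_i$ is one of the $r$ coordinates attaining the maximum and $0$ otherwise, and scoring function $f^{att}(q,k)=-|\langle q,k\rangle|$. *)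

theory Defs
  imports Main "HOL.Rat"
begin

text \<open>Vectors in Q^k are rational lists of length k; block concatenation is list append.\<close>

definition inner_list :: "rat list \<Rightarrow> rat list \<Rightarrow> rat" where
  "inner_list q k = sum_list (map2 (*) q k)"

definition f_att :: "rat list \<Rightarrow> rat list \<Rightarrow> rat" where
  "f_att q k = - \<bar>inner_list q k\<bar>"

definition hardmax :: "rat list \<Rightarrow> rat list" where
  "hardmax xs = (let m = Max (set xs); r = length (filter (\<lambda>x. x = m) xs)
                 in map (\<lambda>x. if x = m then 1 / of_nat r else 0) xs)"

text \<open>Att(q,K,V) = sum_i alpha_i v_i; coordinates are taken up to the common length of the values.\<close>
definition Att :: "rat list \<Rightarrow> rat list list \<Rightarrow> rat list list \<Rightarrow> rat list" where
  "Att q K V = (let \<alpha> = hardmax (map (f_att q) K)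
                in map (\<lambda>j. \<Sum>i<length K. (\<alpha> ! i) * ((V ! i) ! j)) [0..<length (hd V)])"

end

theory Submission
  imports Defs
begin

lemma inner_aux: "length q = m + 2 \<Longrightarrow> inner_list q (replicate m 0 @ [a,b]) = q!m*a + q!(m+1)*b"
proof (induction m arbitrary: q)
  case 0
  then obtain x y where "q = [x,y]"
    by (auto simp: length_Suc_conv numeral_2_eq_2)
  then show ?case by (simp add: inner_list_def)
next
  case (Suc m)
  then obtain x q' where q: "q = x # q'" by (cases q) auto
  with Suc show ?case by (simp add: inner_list_def)
qed

lemma filt: "1 \<le> m \<Longrightarrow> m \<le> n \<Longrightarrow> filter (\<lambda>i. i = m) [1..<n+1] = [m]"
proof -
  assume a: "1 \<le> m" "m \<le> n"
  have e: "[1..<n+1] = [1..<m] @ [m..<m + (n+1-m)]"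
    using a upt_add_eq_append[of 1 m "n+1-m"] by simp
  have e2: "[m..<m + (n+1-m)] = m # [Suc m..<m + (n+1-m)]"
    using a by (intro upt_conv_Cons) simp
  have f1: "filter (\<lambda>i. i = m) [1..<m] = []" by (simp add: filter_empty_conv)
  have f2: "filter (\<lambda>i. i = m) [Suc m..<m + (n+1-m)] = []" by (simp add: filter_empty_conv)
  show ?thesis unfolding e e2 by (simp only: filter_append f1 f2 filter.simps) simp
qed

theorem lemma3:
  fixes dh db d n t :: nat and s :: "nat \<Rightarrow> rat list" and q :: "rat list"
  assumes "dh \<ge> 1" and "db \<ge> 1" and "d = 2 * dh + db + 2" and "n \<ge> 1"
    and "\<forall>i\<in>{1..n}. length (s i) = db"
    and "length q = d" and "q ! (d - 2) = of_nat (t + 1)" and "q ! (d - 1) = 1"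
  shows "Att q
           (map (\<lambda>i. replicate dh 0 @ replicate db 0 @ replicate dh 0 @ [-1, of_nat i]) [1..<n+1])
           (map (\<lambda>i. replicate dh 0 @ s i @ replicate dh 0 @ [0, 0]) [1..<n+1])
         = replicate dh 0 @ s (min (t + 1) n) @ replicate dh 0 @ [0, 0]"
proof -
  define M where "M = 2*dh+db"
  define K where "K = map (\<lambda>i. replicate dh 0 @ replicate db 0 @ replicate dh 0 @ [-1, of_nat i :: rat]) [1..<n+1]"
  define V where "V = map (\<lambda>i. replicate dh 0 @ s i @ replicate dh 0 @ [0, 0::rat]) [1..<n+1]"
  define m where "m = min (t+1) n"
  define g where "g = (\<lambda>i::nat. - \<bar>of_nat i - of_nat (t+1) :: rat\<bar>)"
  have m1: "1 \<le> m" "m \<le> n" using assms(4) by (auto simp: m_def)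
  have kf: "replicate dh 0 @ replicate db 0 @ replicate dh 0 @ [-1, of_nat i :: rat]
      = replicate M 0 @ [-1, of_nat i]" for i
  proof -
    have "M = dh + (db + dh)" by (simp add: M_def)
    then show ?thesis by (simp only: replicate_add append_assoc)
  qed
  have fa: "f_att q (replicate M 0 @ [-1, of_nat i]) = g i" for i
  proof -
    have "inner_list q (replicate M 0 @ [-1, of_nat i]) = q!M*(-1) + q!(M+1)*of_nat i"
      by (rule inner_aux) (use assms(3,6) in \<open>simp add: M_def\<close>)
    also have "\<dots> = of_nat i - of_nat (t+1)"
    proof -
      have "d - 2 = M" "d - 1 = M + 1" using assms(3) by (simp_all add: M_def)
      then show ?thesis using assms(7,8) by simp
    qed
    finally show ?thesis by (simp add: f_att_def g_def abs_minus_commute)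
  qed
  have xs: "map (f_att q) K = map g [1..<n+1]"
    by (simp add: K_def kf fa)
  have gle: "i \<le> n \<Longrightarrow> g i \<le> g m" for i
  proof -
    assume "i \<le> n"
    then have "(of_nat i::rat) \<le> of_nat n" by simp
    show ?thesis
    proof (cases "t+1 \<le> n")
      case True
      then have "m = t+1" by (simp add: m_def)
      then show ?thesis by (simp add: g_def)
    next
      case False
      then have mn: "m = n" by (simp add: m_def)
      have a1: "\<bar>of_nat i - of_nat (t+1) :: rat\<bar> = of_nat (t+1) - of_nat i"
        using \<open>i \<le> n\<close> False by (simp add: abs_if)
      have a2: "\<bar>of_nat n - of_nat (t+1) :: rat\<bar> = of_nat (t+1) - of_nat n"
        using False by (simp add: abs_if)
      show ?thesis using a1 a2 mn \<open>(of_nat i::rat) \<le> of_nat n\<close> by (simp add: g_def)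
    qed
  qed
  have geq: "i = m" if gi: "1 \<le> i" "i \<le> n" "g i = g m" for i
  proof (cases "t+1 \<le> n")
    case True
    then have "m = t+1" by (simp add: m_def)
    then have "\<bar>of_nat i - of_nat (t+1) :: rat\<bar> = 0" using gi(3) by (simp add: g_def)
    then have "(of_nat i :: rat) = of_nat (t+1)" by simp
    then show ?thesis using \<open>m = t+1\<close> by (simp only: of_nat_eq_iff)
  next
    case False
    then have mn: "m = n" by (simp add: m_def)
    have a1: "\<bar>of_nat i - of_nat (t+1) :: rat\<bar> = of_nat (t+1) - of_nat i"
      using gi(2) False by (simp add: abs_if)
    have a2: "\<bar>of_nat n - of_nat (t+1) :: rat\<bar> = of_nat (t+1) - of_nat n"
      using False by (simp add: abs_if)
    have "(of_nat i :: rat) = of_nat n" using gi(3) a1 a2 mn by (simp add: g_def)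
    then show ?thesis using mn by (simp only: of_nat_eq_iff)
  qed
  have Mx: "Max (set (map g [1..<n+1])) = g m"
  proof (rule Max_eqI)
    show "g m \<in> set (map g [1..<n+1])" unfolding set_map by (rule imageI) (use m1 in auto)
  qed (use gle in auto)
  have "filter (\<lambda>x. x = g m) (map g [1..<n+1]) = map g (filter (\<lambda>i. g i = g m) [1..<n+1])"
    by (simp add: filter_map comp_def)
  also have "filter (\<lambda>i. g i = g m) [1..<n+1] = filter (\<lambda>i. i = m) [1..<n+1]"
    by (rule filter_cong) (use geq in auto)
  also have "\<dots> = [m]" using filt m1 by simp
  finally have lf: "length (filter (\<lambda>x. x = g m) (map g [1..<n+1])) = 1" by simp
  have hm: "hardmax (map (f_att q) K) = map (\<lambda>x. if x = g m then 1 else 0) (map g [1..<n+1])"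
    unfolding xs hardmax_def Let_def Mx lf by simp
  have al: "hardmax (map (f_att q) K) ! i = (if i = m - 1 then 1 else 0)" if "i < n" for i
  proof -
    have "hardmax (map (f_att q) K) ! i = (if g (i+1) = g m then 1 else 0)"
      using that by (simp add: hm del: upt_Suc)
    also have "\<dots> = (if i = m - 1 then 1 else 0)"
      using geq[of "i+1"] that m1 by auto
    finally show ?thesis .
  qed
  have lK: "length K = n" by (simp add: K_def)
  have Vi: "V ! i = replicate dh 0 @ s (i+1) @ replicate dh 0 @ [0, 0]" if "i < n" for i
    using that by (simp add: V_def del: upt_Suc)
  have hdV: "length (hd V) = length (replicate dh 0 @ s m @ replicate dh 0 @ [0, 0::rat])"
  proof -
    have "V \<noteq> []" using assms(4) by (simp add: V_def del: upt_Suc)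
    then have "hd V = V ! 0" by (rule hd_conv_nth)
    moreover have "length (s 1) = db" "length (s m) = db" using assms(4,5) m1 by auto
    ultimately show ?thesis using Vi[of 0] assms(4) by simp
  qed
  have sm: "(\<Sum>i<n. (if i = m - 1 then 1 else 0) * (V ! i ! j)) = V ! (m-1) ! j" for j
    using m1 by (simp add: if_distrib[of "\<lambda>x. x * _"] sum.delta cong: if_cong) arith
  have Vm: "V ! (m-1) = replicate dh 0 @ s m @ replicate dh 0 @ [0, 0]"
    using Vi[of "m-1"] m1 by simp
  have "Att q K V = map (\<lambda>j. V ! (m-1) ! j) [0..<length (V ! (m-1))]"
    unfolding Att_def Let_def lK hdV Vm[symmetric]
    by (intro map_cong refl) (subst sm[symmetric], rule sum.cong, simp_all add: al)
  also have "\<dots> = V ! (m-1)" by (rule map_nth)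
  finally have A: "Att q K V = replicate dh 0 @ s m @ replicate dh 0 @ [0, 0]"
    by (simp only: Vm)
  then show ?thesis unfolding K_def V_def m_def .
qed

end
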